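(* Let $N$ be a normal subgroup of a finite group $G$ and let $\eta^*(N)$ be the number of $G$-orbits on the set of $N$-conjugacy classes of maximal cyclic subgroups of $N$. Then $\eta(G) \ge \eta^*(N)$. In particular: (i) if $N$ is central in $G$, then $\eta(G) \ge \eta(N)$; (ii) if $|G:N| = k$, then $\eta(G) \ge \eta(N)/k$.
   Context: A cyclic subgroup $C$ of a finite group $G$ is maximal cyclic if there is no cyclic subgroup $D$ of $G$ with $C < D$. $\eta(G)$ denotes the number of conjugacy classes of maximal cyclic subgroups of $G$. *)

theory Defs
  imports "HOL-Algebra.Algebra"
begin

definition cyclic_subgroups :: "('a, 'b) monoid_scheme \<Rightarrow> 'a set set" where
  "cyclic_subgroups G = {generate G {x} | x. x \<in> carrier G}"

definition max_cyclic_subgroups :: "('a, 'b) monoid_scheme \<Rightarrow> 'a set set" where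
  "max_cyclic_subgroups G =
     {C \<in> cyclic_subgroups G. \<not> (\<exists>D \<in> cyclic_subgroups G. C \<subset> D)}"

definition conj_by :: "('a, 'b) monoid_scheme \<Rightarrow> 'a \<Rightarrow> 'a set \<Rightarrow> 'a set" where
  "conj_by G g H = (\<lambda>h. g \<otimes>\<^bsub>G\<^esub> h \<otimes>\<^bsub>G\<^esub> inv\<^bsub>G\<^esub> g) ` H"

definition max_cyclic_classes :: "('a, 'b) monoid_scheme \<Rightarrow> 'a set set set" where
  "max_cyclic_classes G =
     {{conj_by G g C | g. g \<in> carrier G} | C. C \<in> max_cyclic_subgroups G}"

definition eta :: "('a, 'b) monoid_scheme \<Rightarrow> nat" where
  "eta G = card (max_cyclic_classes G)"

definition eta_star :: "('a, 'b) monoid_scheme \<Rightarrow> 'a set \<Rightarrow> nat" where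
  "eta_star G N =
     card {{image (conj_by G g) Q | g. g \<in> carrier G} | Q.
            Q \<in> max_cyclic_classes (subgroup_generated G N)}"

end

theory Submission
  imports Defs
begin

definition cyc :: "('a, 'b) monoid_scheme \<Rightarrow> 'a set \<Rightarrow> 'a set set" where
  "cyc G H = {generate G {x} | x. x \<in> H}"
definition maxc :: "('a, 'b) monoid_scheme \<Rightarrow> 'a set \<Rightarrow> 'a set set" where
  "maxc G H = {C \<in> cyc G H. \<not> (\<exists>D \<in> cyc G H. C \<subset> D)}"
definition orb :: "('a, 'b) monoid_scheme \<Rightarrow> 'a set \<Rightarrow> 'a set \<Rightarrow> 'a set set" where
  "orb G H C = {conj_by G h C | h. h \<in> H}"

definition gorb :: "('a, 'b) monoid_scheme \<Rightarrow> 'a set \<Rightarrow> 'a set \<Rightarrow> 'a set set set" where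
  "gorb G N C = {orb G N (conj_by G g C) | g. g \<in> carrier G}"

context group begin

lemma conj_by_sub: "C \<subseteq> carrier G \<Longrightarrow> g \<in> carrier G \<Longrightarrow> conj_by G g C \<subseteq> carrier G"
  unfolding conj_by_def by auto

lemma conj_by_one: "C \<subseteq> carrier G \<Longrightarrow> conj_by G \<one> C = C"
  unfolding conj_by_def by (auto simp: image_iff) (metis r_one l_one subsetD)+

lemma conj_elem_comp: "x \<in> carrier G \<Longrightarrow> g \<in> carrier G \<Longrightarrow> h \<in> carrier G \<Longrightarrow>
   g \<otimes> (h \<otimes> x \<otimes> inv h) \<otimes> inv g = (g \<otimes> h) \<otimes> x \<otimes> inv (g \<otimes> h)"
  by (simp add: inv_mult_group m_assoc)

lemma conj_by_comp: "C \<subseteq> carrier G \<Longrightarrow> g \<in> carrier G \<Longrightarrow> h \<in> carrier G \<Longrightarrow>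
   conj_by G g (conj_by G h C) = conj_by G (g \<otimes> h) C"
  unfolding conj_by_def image_image
  by (rule image_cong[OF refl]) (simp add: conj_elem_comp subsetD)

lemma conj_by_inv: "C \<subseteq> carrier G \<Longrightarrow> g \<in> carrier G \<Longrightarrow> conj_by G (inv g) (conj_by G g C) = C"
  by (simp add: conj_by_comp conj_by_one)

lemma conj_by_inv2: "C \<subseteq> carrier G \<Longrightarrow> g \<in> carrier G \<Longrightarrow> conj_by G g (conj_by G (inv g) C) = C"
  by (simp add: conj_by_comp conj_by_one)

lemma conj_inj: "g \<in> carrier G \<Longrightarrow> inj_on (\<lambda>x. g \<otimes> x \<otimes> inv g) (carrier G)"
  unfolding inj_on_def by auto

lemma conj_by_Int: "A \<subseteq> carrier G \<Longrightarrow> B \<subseteq> carrier G \<Longrightarrow> g \<in> carrier G \<Longrightarrow>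
   conj_by G g (A \<inter> B) = conj_by G g A \<inter> conj_by G g B"
  unfolding conj_by_def by (rule inj_on_image_Int[OF conj_inj])

lemma conj_by_subset_iff: "A \<subseteq> carrier G \<Longrightarrow> B \<subseteq> carrier G \<Longrightarrow> g \<in> carrier G \<Longrightarrow>
   conj_by G g A \<subseteq> conj_by G g B \<longleftrightarrow> A \<subseteq> B"
proof
  assume A: "A \<subseteq> carrier G" and B: "B \<subseteq> carrier G" and g: "g \<in> carrier G"
    and h: "conj_by G g A \<subseteq> conj_by G g B"
  from h have "conj_by G (inv g) (conj_by G g A) \<subseteq> conj_by G (inv g) (conj_by G g B)"
    unfolding conj_by_def by (rule image_mono)
  then show "A \<subseteq> B" using conj_by_inv A B g by simp
qed (auto simp: conj_by_def)

lemma conj_by_eq_iff: "A \<subseteq> carrier G \<Longrightarrow> B \<subseteq> carrier G \<Longrightarrow> g \<in> carrier G \<Longrightarrow>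
   conj_by G g A = conj_by G g B \<longleftrightarrow> A = B"
  by (metis conj_by_subset_iff subset_antisym order_refl)

lemma conj_hom: "g \<in> carrier G \<Longrightarrow> (\<lambda>x. g \<otimes> x \<otimes> inv g) \<in> hom G G"
  by (rule homI) (auto, metis l_inv l_one m_assoc m_closed inv_closed)

lemma conj_by_generate: "g \<in> carrier G \<Longrightarrow> x \<in> carrier G \<Longrightarrow>
   conj_by G g (generate G {x}) = generate G {g \<otimes> x \<otimes> inv g}"
proof -
  assume g: "g \<in> carrier G" and x: "x \<in> carrier G"
  interpret h: group_hom G G "\<lambda>x. g \<otimes> x \<otimes> inv g"
    by (simp add: conj_hom g group_hom_axioms_def group_hom_def is_group)
  show ?thesis using h.generate_img[of "{x}"] x unfolding conj_by_def by simp
qed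

lemma conj_by_normal: "N \<lhd> G \<Longrightarrow> g \<in> carrier G \<Longrightarrow> conj_by G g N = N"
proof -
  assume N: "N \<lhd> G" and g: "g \<in> carrier G"
  then interpret normal N G by simp
  have 1: "conj_by G h N \<subseteq> N" if "h \<in> carrier G" for h
    using that unfolding conj_by_def by (auto intro: inv_op_closed2)
  have "N = conj_by G g (conj_by G (inv g) N)" using conj_by_inv2 g subset by auto
  also have "\<dots> \<subseteq> conj_by G g N" using 1[of "inv g"] g unfolding conj_by_def by auto
  finally show ?thesis using 1 g by auto
qed

lemma mcs_eq: "max_cyclic_subgroups G = maxc G (carrier G)"
  unfolding max_cyclic_subgroups_def maxc_def cyclic_subgroups_def cyc_def by simp

lemma mcc_eq: "max_cyclic_classes G = {orb G (carrier G) C | C. C \<in> maxc G (carrier G)}"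
  unfolding max_cyclic_classes_def mcs_eq orb_def by simp

lemma sg_eq: "subgroup N G \<Longrightarrow> subgroup_generated G N = G\<lparr>carrier := N\<rparr>"
  using subgroup.carrier_subgroup_generated_subgroup[of N G]
  unfolding subgroup_generated_def carrier_subgroup_generated by simp

lemma cs_sg: "subgroup N G \<Longrightarrow> cyclic_subgroups (subgroup_generated G N) = cyc G N"
proof -
  assume N: "subgroup N G"
  have eq: "generate (subgroup_generated G N) {x} = generate G {x}" if "x \<in> N" for x
    using sg_eq[OF N] generate_consistent[of "{x}" N] N that by simp
  show ?thesis unfolding cyclic_subgroups_def cyc_def
    using subgroup.carrier_subgroup_generated_subgroup[OF N] eq by auto
qed

lemma mcs_sg: "subgroup N G \<Longrightarrow> max_cyclic_subgroups (subgroup_generated G N) = maxc G N"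
  unfolding max_cyclic_subgroups_def maxc_def cs_sg by simp

lemma conj_by_sg: "subgroup N G \<Longrightarrow> n \<in> N \<Longrightarrow> conj_by (subgroup_generated G N) n C = conj_by G n C"
  unfolding conj_by_def
  using inv_subgroup_generated[of n N] subgroup.carrier_subgroup_generated_subgroup[of N G] by simp

lemma mcc_sg: "subgroup N G \<Longrightarrow> max_cyclic_classes (subgroup_generated G N) = {orb G N C | C. C \<in> maxc G N}"
proof -
  assume N: "subgroup N G"
  have eq: "{conj_by (subgroup_generated G N) g C | g. g \<in> carrier (subgroup_generated G N)} = orb G N C" for C
    unfolding orb_def using subgroup.carrier_subgroup_generated_subgroup[OF N] conj_by_sg[OF N] by (auto, metis)
  show ?thesis unfolding max_cyclic_classes_def mcs_sg[OF N] eq by simp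
qed

lemma cyc_sub: "H \<subseteq> carrier G \<Longrightarrow> C \<in> cyc G H \<Longrightarrow> C \<subseteq> carrier G"
  unfolding cyc_def using generate_incl by blast

lemma conj_cyc: "H \<subseteq> carrier G \<Longrightarrow> g \<in> carrier G \<Longrightarrow> conj_by G g H = H \<Longrightarrow> C \<in> cyc G H
   \<Longrightarrow> conj_by G g C \<in> cyc G H"
proof -
  assume H: "H \<subseteq> carrier G" and g: "g \<in> carrier G" and gH: "conj_by G g H = H" and C: "C \<in> cyc G H"
  then obtain x where x: "x \<in> H" "C = generate G {x}" unfolding cyc_def by auto
  have "g \<otimes> x \<otimes> inv g \<in> H" using gH x(1) unfolding conj_by_def by auto
  then show ?thesis using conj_by_generate[of g x] x H g unfolding cyc_def by auto
qed

lemma conj_maxc: "H \<subseteq> carrier G \<Longrightarrow> g \<in> carrier G \<Longrightarrow> conj_by G g H = H \<Longrightarrow> C \<in> maxc G H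
   \<Longrightarrow> conj_by G g C \<in> maxc G H"
proof -
  assume H: "H \<subseteq> carrier G" and g: "g \<in> carrier G" and gH: "conj_by G g H = H" and C: "C \<in> maxc G H"
  have Cc: "C \<in> cyc G H" and Cm: "\<not> (\<exists>D \<in> cyc G H. C \<subset> D)" using C unfolding maxc_def by auto
  have CG: "C \<subseteq> carrier G" using cyc_sub H Cc by auto
  have gH': "conj_by G (inv g) H = H" using gH conj_by_inv[OF H g] by simp
  have "\<not> conj_by G g C \<subset> D" if D: "D \<in> cyc G H" for D
  proof
    assume lt: "conj_by G g C \<subset> D"
    have DG: "D \<subseteq> carrier G" using cyc_sub H D by auto
    have "conj_by G (inv g) D \<in> cyc G H" using conj_cyc[OF H _ gH' D] g by simp
    moreover have "C \<subset> conj_by G (inv g) D"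
    proof -
      have "conj_by G g C \<subset> conj_by G g (conj_by G (inv g) D)" using lt conj_by_inv2[OF DG g] by simp
      then show ?thesis using conj_by_subset_iff[OF CG _ g, of "conj_by G (inv g) D"]
        conj_by_eq_iff[OF CG _ g, of "conj_by G (inv g) D"] conj_by_sub[OF DG, of "inv g"] g by auto
    qed
    ultimately show False using Cm by auto
  qed
  then show ?thesis using conj_cyc[OF H g gH Cc] unfolding maxc_def by auto
qed

lemma subgroup_pow_closed: "subgroup H G \<Longrightarrow> x \<in> H \<Longrightarrow> x [^] (n::nat) \<in> H"
  by (induction n) (auto simp: subgroup.one_closed subgroup.m_closed subgroup.mem_carrier)

lemma sub_cyclic:
  assumes fin: "finite (carrier G)" and y: "y \<in> carrier G" and H: "subgroup H G"
    and Hy: "H \<subseteq> generate G {y}"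
  shows "\<exists>z\<in>H. H = generate G {z}"
proof -
  interpret Hs: subgroup H G by (rule H)
  have gen: "generate G {y} = {y [^] k | k. k \<in> (UNIV :: nat set)}"
    using generate_pow_on_finite_carrier[OF fin y] .
  have o: "0 < ord y" "y [^] ord y = \<one>" using ord_ge_1[OF fin y] y by auto
  define d :: nat where "d = (LEAST k::nat. 0 < k \<and> y [^] k \<in> H)"
  have "0 < ord y \<and> y [^] ord y \<in> H" using o Hs.one_closed by simp
  then have dP: "0 < d \<and> y [^] d \<in> H" unfolding d_def by (rule LeastI[where P="\<lambda>k::nat. 0 < k \<and> y [^] k \<in> H"])
  have dmin: "d \<le> k" if "0 < k" "k \<in> (UNIV::nat set)" "y [^] k \<in> H" for k
    unfolding d_def by (rule Least_le) (use that in auto)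
  define z where "z = y [^] d"
  have z: "z \<in> H" "z \<in> carrier G" using dP y unfolding z_def by auto
  have "H \<subseteq> generate G {z}"
  proof
    fix h assume h: "h \<in> H"
    then obtain k :: nat where k: "h = y [^] k" using Hy gen by auto
    have split: "y [^] k = (y [^] d) [^] (k div d) \<otimes> y [^] (k mod d)"
      using y by (simp add: nat_pow_pow nat_pow_mult)
    have "y [^] (k mod d) = inv ((y [^] d) [^] (k div d)) \<otimes> y [^] k"
      using y split by (simp add: inv_solve_left)
    also have "\<dots> \<in> H" using h k dP subgroup_pow_closed[OF H] by (simp add: Hs.m_closed Hs.m_inv_closed)
    finally have "y [^] (k mod d) \<in> H" .
    then have "k mod d = 0" using dmin[of "k mod d"] dP by simp (meson mod_less_divisor not_gr0 not_le)
    then have "h = z [^] (k div d)" using split k y z_def by simp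
    then show "h \<in> generate G {z}" using generate_pow_on_finite_carrier[OF fin z(2)] by auto
  qed
  moreover have "generate G {z} \<subseteq> H" using generate_subgroup_incl[OF _ H] z by auto
  ultimately show ?thesis using z by blast
qed

lemma exists_maxc:
  assumes fin: "finite (carrier G)" and H: "H \<subseteq> carrier G" and x: "x \<in> H"
  shows "\<exists>M\<in>maxc G H. generate G {x} \<subseteq> M"
proof -
  have "cyc G H \<subseteq> Pow (carrier G)" using cyc_sub[OF H] by auto
  then have f: "finite (cyc G H)" using fin finite_Pow_iff finite_subset by metis
  have "generate G {x} \<in> cyc G H" using x unfolding cyc_def by auto
  from finite_has_maximal2[OF f this] obtain M where
    M: "M \<in> cyc G H" "generate G {x} \<subseteq> M" "\<forall>b\<in>cyc G H. M \<subseteq> b \<longrightarrow> M = b" by blast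
  then have "M \<in> maxc G H" unfolding maxc_def by auto
  then show ?thesis using M by blast
qed

lemma cancel_l: "g \<in> carrier G \<Longrightarrow> x \<in> carrier G \<Longrightarrow> g \<otimes> (inv g \<otimes> x) = x"
  by (simp add: m_assoc[symmetric])

lemma orb_conj:
  assumes N: "N \<lhd> G" and C: "C \<subseteq> carrier G" and g: "g \<in> carrier G"
  shows "conj_by G g ` orb G N C = orb G N (conj_by G g C)"
proof -
  interpret normal N G by (rule N)
  have NG: "N \<subseteq> carrier G" by (rule subset)
  show ?thesis
  proof (intro Set.set_eqI HOL.iffI)
    fix W assume "W \<in> conj_by G g ` orb G N C"
    then obtain n where n: "n \<in> N" "W = conj_by G g (conj_by G n C)" unfolding orb_def by auto
    have nc: "n \<in> carrier G" using n NG by auto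
    have m: "g \<otimes> n \<otimes> inv g \<in> N" using inv_op_closed2 g n by auto
    have "W = conj_by G (g \<otimes> n \<otimes> inv g) (conj_by G g C)"
      using n C g nc by (simp add: conj_by_comp m_assoc)
    then show "W \<in> orb G N (conj_by G g C)" using m unfolding orb_def by auto
  next
    fix W assume "W \<in> orb G N (conj_by G g C)"
    then obtain m where m: "m \<in> N" "W = conj_by G m (conj_by G g C)" unfolding orb_def by auto
    have mc: "m \<in> carrier G" using m NG by auto
    have n: "inv g \<otimes> m \<otimes> g \<in> N" using inv_op_closed1 g m by auto
    have "W = conj_by G g (conj_by G (inv g \<otimes> m \<otimes> g) C)"
      using m C g mc by (simp add: conj_by_comp m_assoc cancel_l)
    then show "W \<in> conj_by G g ` orb G N C" using n unfolding orb_def by auto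
  qed
qed

lemma orb_N:
  assumes N: "subgroup N G" and S: "S \<subseteq> carrier G" and n: "n \<in> N"
  shows "orb G N (conj_by G n S) = orb G N S"
proof -
  interpret subgroup N G by (rule N)
  have nc: "n \<in> carrier G" using n by auto
  show ?thesis
  proof (intro Set.set_eqI HOL.iffI)
    fix Y assume "Y \<in> orb G N (conj_by G n S)"
    then obtain m where m: "m \<in> N" "Y = conj_by G m (conj_by G n S)" unfolding orb_def by auto
    then have "Y = conj_by G (m \<otimes> n) S" using S nc by (simp add: conj_by_comp)
    then show "Y \<in> orb G N S" using m n unfolding orb_def by auto
  next
    fix Y assume "Y \<in> orb G N S"
    then obtain m where m: "m \<in> N" "Y = conj_by G m S" unfolding orb_def by auto
    have mc: "m \<in> carrier G" using m by auto
    have "Y = conj_by G (m \<otimes> inv n) (conj_by G n S)" using S nc mc m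
      by (simp add: conj_by_comp m_assoc)
    then show "Y \<in> orb G N (conj_by G n S)" using m n unfolding orb_def by auto
  qed
qed

lemma gorb_conj:
  assumes C: "C \<subseteq> carrier G" and g0: "g0 \<in> carrier G"
  shows "gorb G N (conj_by G g0 C) = gorb G N C"
proof (intro Set.set_eqI HOL.iffI)
  fix W assume "W \<in> gorb G N (conj_by G g0 C)"
  then obtain g where g: "g \<in> carrier G" "W = orb G N (conj_by G g (conj_by G g0 C))" unfolding gorb_def by auto
  then have "W = orb G N (conj_by G (g \<otimes> g0) C)" using C g0 by (simp add: conj_by_comp)
  then show "W \<in> gorb G N C" using g g0 unfolding gorb_def by auto
next
  fix W assume "W \<in> gorb G N C"
  then obtain g where g: "g \<in> carrier G" "W = orb G N (conj_by G g C)" unfolding gorb_def by auto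
  then have "W = orb G N (conj_by G (g \<otimes> inv g0) (conj_by G g0 C))" using C g0
    by (simp add: conj_by_comp m_assoc)
  then show "W \<in> gorb G N (conj_by G g0 C)" using g g0 unfolding gorb_def by auto
qed

lemma ES_eq:
  assumes N: "N \<lhd> G"
  shows "{{image (conj_by G g) Q | g. g \<in> carrier G} | Q. Q \<in> max_cyclic_classes (subgroup_generated G N)}
       = {gorb G N C | C. C \<in> maxc G N}"
proof -
  interpret normal N G by (rule N)
  have e: "{image (conj_by G g) (orb G N C) | g. g \<in> carrier G} = gorb G N C" if "C \<in> maxc G N" for C
  proof -
    have "C \<subseteq> carrier G" using cyc_sub[OF subset] that unfolding maxc_def by auto
    then show ?thesis unfolding gorb_def using orb_conj[OF N] by (auto; metis)
  qed
  show ?thesis unfolding mcc_sg[OF is_subgroup]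
  proof (intro Set.set_eqI HOL.iffI)
    fix E assume "E \<in> {{conj_by G g ` Q |g. g \<in> carrier G} |Q. Q \<in> {orb G N C |C. C \<in> maxc G N}}"
    then obtain C where "C \<in> maxc G N" "E = {conj_by G g ` orb G N C |g. g \<in> carrier G}" by blast
    then show "E \<in> {gorb G N C |C. C \<in> maxc G N}" using e by blast
  next
    fix E assume "E \<in> {gorb G N C |C. C \<in> maxc G N}"
    then obtain C where "C \<in> maxc G N" "E = gorb G N C" by blast
    then show "E \<in> {{conj_by G g ` Q |g. g \<in> carrier G} |Q. Q \<in> {orb G N C |C. C \<in> maxc G N}}"
      using e by blast
  qed
qed

lemma finite_maxc: "finite (carrier G) \<Longrightarrow> H \<subseteq> carrier G \<Longrightarrow> finite (maxc G H)"
proof -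
  assume fin: "finite (carrier G)" and H: "H \<subseteq> carrier G"
  have "maxc G H \<subseteq> Pow (carrier G)" using cyc_sub[OF H] unfolding maxc_def by auto
  then show ?thesis using fin finite_Pow_iff finite_subset by metis
qed

lemma part1:
  assumes fin: "finite (carrier G)" and N: "N \<lhd> G"
  shows "eta_star G N \<le> eta G"
proof -
  interpret normal N G by (rule N)
  have NG: "N \<subseteq> carrier G" by (rule subset)
  let ?ES = "{gorb G N C | C. C \<in> maxc G N}"
  let ?MG = "maxc G (carrier G)"
  have es: "eta_star G N = card ?ES" unfolding eta_star_def ES_eq[OF N] ..
  have mcc: "max_cyclic_classes G = orb G (carrier G) ` ?MG" unfolding mcc_eq by blast
  have finMG: "finite ?MG" using finite_maxc[OF fin] by simp
  define P where "P E M \<longleftrightarrow> M \<in> ?MG \<and> M \<inter> N \<in> maxc G N \<and> E = gorb G N (M \<inter> N)" for E M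
  have ex: "\<exists>M. P E M" if E: "E \<in> ?ES" for E
  proof -
    obtain C where C: "C \<in> maxc G N" "E = gorb G N C" using E by blast
    then obtain x where x: "x \<in> N" "C = generate G {x}" unfolding maxc_def cyc_def by auto
    have xc: "x \<in> carrier G" using x NG by auto
    obtain M where M: "M \<in> ?MG" "C \<subseteq> M" using exists_maxc[OF fin subset_refl xc] x by auto
    obtain y where y: "y \<in> carrier G" "M = generate G {y}" using M unfolding maxc_def cyc_def by auto
    have sub: "subgroup (M \<inter> N) G"
      using subgroups_Inter_pair[OF _ is_subgroup] generate_is_subgroup y by auto
    obtain z where z: "z \<in> M \<inter> N" "M \<inter> N = generate G {z}"
      using sub_cyclic[OF fin y(1) sub] y by auto
    have cy: "M \<inter> N \<in> cyc G N" unfolding cyc_def using z by auto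
    have "C \<subseteq> N" using x generate_subgroup_incl[OF _ is_subgroup, of "{x}"] by auto
    then have "C \<subseteq> M \<inter> N" using M by auto
    then have "C = M \<inter> N" using C(1) cy unfolding maxc_def by auto
    then show ?thesis unfolding P_def using M C by auto
  qed
  define phi where "phi E = orb G (carrier G) (SOME M. P E M)" for E
  have PS: "P E (SOME M. P E M)" if "E \<in> ?ES" for E using someI_ex[OF ex[OF that]] .
  have inj: "inj_on phi ?ES"
  proof (rule inj_onI)
    fix E1 E2 assume E1: "E1 \<in> ?ES" and E2: "E2 \<in> ?ES" and eq: "phi E1 = phi E2"
    define M1 where "M1 = (SOME M. P E1 M)"
    define M2 where "M2 = (SOME M. P E2 M)"
    have P1: "P E1 M1" and P2: "P E2 M2" using PS E1 E2 unfolding M1_def M2_def by auto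
    have M1c: "M1 \<subseteq> carrier G" and M2c: "M2 \<subseteq> carrier G"
      using P1 P2 cyc_sub[OF subset_refl] unfolding P_def maxc_def by auto
    have "M1 \<in> orb G (carrier G) M1" unfolding orb_def using conj_by_one[OF M1c] by force
    then have "M1 \<in> orb G (carrier G) M2" using eq unfolding phi_def M1_def M2_def by simp
    then obtain g where g: "g \<in> carrier G" "M1 = conj_by G g M2" unfolding orb_def by auto
    have "M1 \<inter> N = conj_by G g (M2 \<inter> N)"
      using g conj_by_Int[OF M2c NG g(1)] conj_by_normal[OF N g(1)] by simp
    then have "gorb G N (M1 \<inter> N) = gorb G N (M2 \<inter> N)" using gorb_conj[of "M2 \<inter> N" g N] M2c g by auto
    then show "E1 = E2" using P1 P2 unfolding P_def by simp
  qed
  have img: "phi ` ?ES \<subseteq> max_cyclic_classes G" unfolding mcc phi_def using PS unfolding P_def by auto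
  have fin2: "finite (max_cyclic_classes G)" unfolding mcc using finMG by simp
  show ?thesis unfolding es eta_def using card_inj_on_le[OF inj img fin2] .
qed

lemma gorb_card:
  assumes fin: "finite (carrier G)" and N: "N \<lhd> G" and C: "C \<subseteq> carrier G"
  shows "card (gorb G N C) \<le> card (rcosets N)"
proof -
  interpret normal N G by (rule N)
  have NG: "N \<subseteq> carrier G" by (rule subset)
  define f where "f Rc = orb G N (conj_by G (SOME g. g \<in> Rc) C)" for Rc
  have finR: "finite (rcosets N)" unfolding RCOSETS_def using fin by auto
  have "gorb G N C \<subseteq> f ` (rcosets N)"
  proof
    fix W assume "W \<in> gorb G N C"
    then obtain g where g: "g \<in> carrier G" "W = orb G N (conj_by G g C)" unfolding gorb_def by auto
    have R: "N #> g \<in> rcosets N" using rcosetsI[OF NG g(1)] .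
    have "g \<in> N #> g" using rcos_self[OF g(1) is_subgroup] .
    then have "(SOME g'. g' \<in> N #> g) \<in> N #> g" by (rule someI)
    then obtain n where n: "n \<in> N" "(SOME g'. g' \<in> N #> g) = n \<otimes> g" unfolding r_coset_def by auto
    have nc: "n \<in> carrier G" using n NG by auto
    have "f (N #> g) = orb G N (conj_by G n (conj_by G g C))"
      unfolding f_def n(2) using conj_by_comp[OF C nc g(1)] by simp
    also have "\<dots> = W" using orb_N[OF is_subgroup _ n(1)] conj_by_sub[OF C g(1)] g(2) by simp
    finally show "W \<in> f ` (rcosets N)" using R by force
  qed
  then have "card (gorb G N C) \<le> card (f ` (rcosets N))" using finR by (simp add: card_mono)
  also have "\<dots> \<le> card (rcosets N)" using finR by (rule card_image_le)
  finally show ?thesis .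
qed

lemma part2:
  assumes fin: "finite (carrier G)" and N: "N \<lhd> G"
  shows "eta (subgroup_generated G N) \<le> card (rcosets N) * eta_star G N"
proof -
  interpret normal N G by (rule N)
  have NG: "N \<subseteq> carrier G" by (rule subset)
  let ?ES = "{gorb G N C | C. C \<in> maxc G N}"
  let ?Nc = "orb G N ` maxc G N"
  have es: "eta_star G N = card ?ES" unfolding eta_star_def ES_eq[OF N] ..
  have en: "eta (subgroup_generated G N) = card ?Nc" unfolding eta_def mcc_sg[OF is_subgroup] by (simp add: Setcompr_eq_image)
  have sub1: "?Nc \<subseteq> \<Union> ?ES"
  proof
    fix Q assume "Q \<in> ?Nc"
    then obtain C where C: "C \<in> maxc G N" "Q = orb G N C" by auto
    have "C \<subseteq> carrier G" using C cyc_sub[OF NG] unfolding maxc_def by auto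
    then have "orb G N (conj_by G \<one> C) = Q" using C conj_by_one by simp
    then have "Q \<in> gorb G N C" unfolding gorb_def by blast
    then show "Q \<in> \<Union> ?ES" using C by blast
  qed
  have finES: "finite ?ES" using finite_maxc[OF fin NG] by (simp add: Setcompr_eq_image)
  have "card ?Nc \<le> card (\<Union> ?ES)"
  proof (rule card_mono)
    have "\<Union> ?ES \<subseteq> ?Nc"
    proof
      fix Q assume "Q \<in> \<Union> ?ES"
      then obtain C g where C: "C \<in> maxc G N" "g \<in> carrier G" "Q = orb G N (conj_by G g C)"
        unfolding gorb_def by auto
      have "conj_by G g C \<in> maxc G N" using conj_maxc[OF NG C(2) conj_by_normal[OF N C(2)] C(1)] .
      then show "Q \<in> ?Nc" using C by auto
    qed
    then show "finite (\<Union> ?ES)" using finite_maxc[OF fin NG] finite_subset by blast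
  qed (rule sub1)
  also have "\<dots> \<le> sum card ?ES" by (rule card_Union_le_sum_card)
  also have "\<dots> \<le> card ?ES * card (rcosets N)"
  proof (rule sum_bounded_above[where K = "card (rcosets N)", simplified])
    fix E assume "E \<in> ?ES"
    then obtain C where C: "C \<in> maxc G N" "E = gorb G N C" by auto
    have "C \<subseteq> carrier G" using C cyc_sub[OF NG] unfolding maxc_def by auto
    then show "card E \<le> card (rcosets N)" using gorb_card[OF fin N] C by auto
  qed
  finally show ?thesis using en es by (simp add: mult.commute)
qed

lemma part3:
  assumes fin: "finite (carrier G)" and N: "N \<lhd> G"
    and cen: "\<forall>n\<in>N. \<forall>g\<in>carrier G. n \<otimes> g = g \<otimes> n"
  shows "eta (subgroup_generated G N) = eta_star G N"
proof -
  interpret normal N G by (rule N)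
  have NG: "N \<subseteq> carrier G" by (rule subset)
  have fix1: "conj_by G g C = C" if "C \<subseteq> N" "g \<in> carrier G" for C g
  proof -
    have "g \<otimes> h \<otimes> inv g = h" if "h \<in> N" for h
      using cen that \<open>g \<in> carrier G\<close> NG
      by (metis cancel_l inv_closed m_assoc subsetD)
    then show ?thesis unfolding conj_by_def using \<open>C \<subseteq> N\<close> by (auto simp: image_iff) (metis subsetD)+
  qed
  have CN: "C \<subseteq> N" if "C \<in> maxc G N" for C
    using that generate_subgroup_incl[OF _ is_subgroup] unfolding maxc_def cyc_def by auto
  have o1: "orb G N C = {C}" if "C \<in> maxc G N" for C
  proof -
    have "C = conj_by G \<one> C" using fix1[OF CN[OF that]] by simp
    then show ?thesis
      unfolding orb_def using fix1[OF CN[OF that]] NG subgroup.one_closed[OF is_subgroup] by blast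
  qed
  have o2: "gorb G N C = {{C}}" if "C \<in> maxc G N" for C
    unfolding gorb_def using fix1[OF CN[OF that]] o1[OF that] NG by (auto intro!: exI[of _ "\<one>"])
  have es: "eta_star G N = card ((\<lambda>C. {{C}}) ` maxc G N)" unfolding eta_star_def ES_eq[OF N]
    unfolding Setcompr_eq_image by (intro arg_cong[where f=card] image_cong refl o2)
  have en: "eta (subgroup_generated G N) = card ((\<lambda>C. {C}) ` maxc G N)"
    unfolding eta_def mcc_sg[OF is_subgroup] unfolding Setcompr_eq_image by (intro arg_cong[where f=card] image_cong refl o1)
  have "inj_on (\<lambda>C. {{C}}) (maxc G N)" "inj_on (\<lambda>C. {C}) (maxc G N)" unfolding inj_on_def by auto
  then show ?thesis using es en by (simp add: card_image)
qed

end

theorem proposition2p3: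
  fixes G :: "('a, 'b) monoid_scheme" and N :: "'a set"
  assumes "group G" and "finite (carrier G)" and "N \<lhd> G"
  shows "eta_star G N \<le> eta G
    \<and> ((\<forall>n\<in>N. \<forall>g\<in>carrier G. n \<otimes>\<^bsub>G\<^esub> g = g \<otimes>\<^bsub>G\<^esub> n)
           \<longrightarrow> eta (subgroup_generated G N) \<le> eta G)
    \<and> (\<forall>k::nat. card (rcosets\<^bsub>G\<^esub> N) = k
           \<longrightarrow> real (eta (subgroup_generated G N)) / real k \<le> real (eta G))"
proof -
  interpret group G by (rule assms(1))
  have p1: "eta_star G N \<le> eta G" using part1[OF assms(2,3)] .
  have p3: "(\<forall>n\<in>N. \<forall>g\<in>carrier G. n \<otimes>\<^bsub>G\<^esub> g = g \<otimes>\<^bsub>G\<^esub> n) \<longrightarrow> eta (subgroup_generated G N) \<le> eta G"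
    using part3[OF assms(2,3)] p1 by simp
  have p2: "real (eta (subgroup_generated G N)) / real k \<le> real (eta G)" if k: "card (rcosets\<^bsub>G\<^esub> N) = k" for k
  proof (cases "k = 0")
    case True
    then show ?thesis by simp
  next
    case False
    have "eta (subgroup_generated G N) \<le> k * eta_star G N" using part2[OF assms(2,3)] k by simp
    also have "\<dots> \<le> k * eta G" using p1 by simp
    finally have "real (eta (subgroup_generated G N)) \<le> real k * real (eta G)" by (simp flip: of_nat_mult)
    then show ?thesis using False by (simp add: divide_le_eq mult.commute)
  qed
  show ?thesis using p1 p2 p3 by blast
qed

end
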